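(* The vector $\lambda=(\lambda_1,\dots,\lambda_m)$, $\lambda_j:=\nu_j+a_j-j$, is dominant (i.e. $\lambda_1\ge\lambda_2\ge\dots\ge\lambda_m$) and satisfies $$\lambda_j+\lambda_{m+1-j}=w'+n-m-1$$ for all $j\neq\frac{m+1}{2}$. In the exceptional case $n\equiv m\equiv1\bmod 2$ one has $2\lambda_{(m+1)/2}=w'+n-m-2$, whereas in the non-exceptional case the displayed identity holds for all $j=1,\dots,m$ (so $\lambda\in X_0^+(m)$ then).
   Context: Let $n,m\ge1$, not both $1$. For $N\ge1$: $L_0^+(N):=\{(w,l)\in\mathbb Z\times\mathbb Z^N:\ l_1>\dots>l_N,\ l_i+l_{N+1-i}=0,\ w+l_i\equiv N+1 \bmod 2\}$; $X^+(N):=\{\mu\in\mathbb Z^N:\mu_1\ge\dots\ge\mu_N\}$; $X_0^+(N):=\{\mu\in X^+(N): \mu_i+\mu_{N+1-i}\text{ is independent of } i\}$ (purity). There is a bijection $L_0^+(N)\to X_0^+(N)$, $(w,l)\mapsto\mu$ with $\mu_i=\frac{w+l_i+2i-1-N}{2}$, with inverse $w=\mu_1+\mu_N$, $l_i=2\mu_i+N+1-w-2i$. Let $\mu\in X_0^+(n)$ and $\nu\in X_0^+(m)$ correspond to $(w,l)\in L_0^+(n)$ and $(w',l')\in L_0^+(m)$. Standing assumptions: $l_1>l'_1$, and for every pair $(i,j)$ either $l_i\ne l'_j$, or $n,m$ are both odd, $i=\frac{n+1}2$, $j=\frac{m+1}2$ (this holds whenever the associated archimedean pair has a critical number). The position tuple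 $a\in\mathbb Z^m$: $a_j$ is the unique integer in $\{1,\dots,n-1\}$ with $l_{a_j}>l'_j\ge l_{1+a_j}$. *)

theory Defs
  imports Main
begin

text \<open>Tuples in Z^N are represented as functions nat \<Rightarrow> int, using the indices 1..N.\<close>

definition L0plus :: "nat \<Rightarrow> int \<Rightarrow> (nat \<Rightarrow> int) \<Rightarrow> bool" where
  "L0plus N w l \<longleftrightarrow>
     (\<forall>i\<in>{1..N}. \<forall>j\<in>{1..N}. i < j \<longrightarrow> l j < l i) \<and>
     (\<forall>i\<in>{1..N}. l i + l (N + 1 - i) = 0) \<and>
     (\<forall>i\<in>{1..N}. (w + l i) mod 2 = (int N + 1) mod 2)"

definition Xplus :: "nat \<Rightarrow> (nat \<Rightarrow> int) set" where
  "Xplus N = {\<mu>. \<forall>i\<in>{1..N}. \<forall>j\<in>{1..N}. i \<le> j \<longrightarrow> \<mu> j \<le> \<mu> i}"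

definition X0plus :: "nat \<Rightarrow> (nat \<Rightarrow> int) set" where
  "X0plus N = {\<mu> \<in> Xplus N. \<exists>c. \<forall>i\<in>{1..N}. \<mu> i + \<mu> (N + 1 - i) = c}"

text \<open>The bijection L_0^+(N) \<rightarrow> X_0^+(N): mu_i = (w + l_i + 2i - 1 - N)/2 (exact division).\<close>
definition L_to_X :: "nat \<Rightarrow> int \<Rightarrow> (nat \<Rightarrow> int) \<Rightarrow> nat \<Rightarrow> int" where
  "L_to_X N w l i = (w + l i + 2 * int i - 1 - int N) div 2"

definition pos_tuple :: "nat \<Rightarrow> (nat \<Rightarrow> int) \<Rightarrow> (nat \<Rightarrow> int) \<Rightarrow> nat \<Rightarrow> nat" where
  "pos_tuple n l l' j = (THE a. a \<in> {1..n-1} \<and> l a > l' j \<and> l' j \<ge> l (a + 1))"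

end

theory Submission
  imports Defs
begin


lemma L0_dec:
  assumes "L0plus N w l" "i \<ge> 1" "k \<le> N" "i \<le> k"
  shows "l i - l k \<ge> 2 * (int k - int i)"
  using assms(3,4)
proof (induction k)
  case 0 then show ?case by simp
next
  case (Suc k)
  show ?case
  proof (cases "i = Suc k")
    case True then show ?thesis by simp
  next
    case False
    hence ik: "i \<le> k" using Suc by simp
    have IH: "l i - l k \<ge> 2 * (int k - int i)" using Suc ik by simp
    have lt: "l (Suc k) < l k" using assms(1) Suc ik assms(2) unfolding L0plus_def by auto
    have p1: "(w + l k) mod 2 = (int N + 1) mod 2" "(w + l (Suc k)) mod 2 = (int N + 1) mod 2"
      using assms(1) Suc ik assms(2) unfolding L0plus_def by auto
    have "l k - l (Suc k) \<ge> 2" using lt p1 by presburger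
    then show ?thesis using IH by simp
  qed
qed

lemma L0_mono:
  assumes "L0plus N w l" "i \<ge> 1" "k \<le> N" "i \<le> k"
  shows "l k \<le> l i"
  using L0_dec[OF assms] assms(4) by simp

lemma pos_eq:
  assumes "L0plus n w l" "a \<in> {1..n-1}" "l a > x" "x \<ge> l (a + 1)"
  shows "(THE a. a \<in> {1..n-1} \<and> l a > x \<and> x \<ge> l (a + 1)) = a"
proof (rule the_equality)
  show "a \<in> {1..n-1} \<and> l a > x \<and> x \<ge> l (a + 1)" using assms by auto
next
  fix b assume b: "b \<in> {1..n-1} \<and> l b > x \<and> x \<ge> l (b + 1)"
  show "b = a"
  proof (rule ccontr)
    assume "b \<noteq> a"
    then consider "a < b" | "b < a" by linarith
    then show False
    proof cases
      case 1
      have "l b \<le> l (a+1)" using L0_mono[OF assms(1), of "a+1" b] 1 b by auto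
      then show False using b assms by auto
    next
      case 2
      have "l a \<le> l (b+1)" using L0_mono[OF assms(1), of "b+1" a] 2 assms by auto
      then show False using b assms by auto
    qed
  qed
qed

lemma pos_ex:
  assumes "L0plus n w l" "n \<ge> 1" "l 1 > x" "x \<ge> l n"
  shows "\<exists>a. a \<in> {1..n-1} \<and> l a > x \<and> x \<ge> l (a + 1)"
proof -
  define S where "S = {k\<in>{1..n}. l k > x}"
  have fin: "finite S" unfolding S_def by simp
  have "1 \<in> S" using assms unfolding S_def by auto
  hence ne: "S \<noteq> {}" by auto
  define a where "a = Max S"
  have aS: "a \<in> S" using Max_in[OF fin ne] a_def by simp
  have "n \<notin> S" using assms unfolding S_def by auto
  hence an: "a < n" using aS unfolding S_def by (metis (no_types, lifting) atLeastAtMost_iff mem_Collect_eq order_le_less)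
  have "a + 1 \<notin> S" using Max_ge[OF fin, of "a+1"] a_def by fastforce
  hence "x \<ge> l (a+1)" using an aS unfolding S_def by auto
  moreover have "a \<in> {1..n-1}" "l a > x" using aS an unfolding S_def by auto
  ultimately show ?thesis by blast
qed



theorem proposition3p1:
  fixes n m :: nat and w w' :: int and l l' nu lam :: "nat \<Rightarrow> int"
  assumes "n \<ge> 1" and "m \<ge> 1" and "\<not> (n = 1 \<and> m = 1)"
    and "L0plus n w l" and "L0plus m w' l'"
    and "\<forall>j. nu j = L_to_X m w' l' j"
    and "l 1 > l' 1"
    and "\<forall>i\<in>{1..n}. \<forall>j\<in>{1..m}. l i \<noteq> l' j \<or>
           (odd n \<and> odd m \<and> 2 * i = n + 1 \<and> 2 * j = m + 1)"
    and "\<forall>j. lam j = nu j + int (pos_tuple n l l' j) - int j"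
  shows "(\<forall>i\<in>{1..m}. \<forall>j\<in>{1..m}. i \<le> j \<longrightarrow> lam j \<le> lam i)
    \<and> (\<forall>j\<in>{1..m}. 2 * j \<noteq> m + 1 \<longrightarrow> lam j + lam (m + 1 - j) = w' + int n - int m - 1)
    \<and> (odd n \<and> odd m \<longrightarrow> 2 * lam ((m + 1) div 2) = w' + int n - int m - 2)
    \<and> (\<not> (odd n \<and> odd m) \<longrightarrow>
         (\<forall>j\<in>{1..m}. lam j + lam (m + 1 - j) = w' + int n - int m - 1) \<and> lam \<in> X0plus m)"
  
proof -
  note L = assms(4) note L' = assms(5)
  define A where "A j = pos_tuple n l l' j" for j
  have Ldef: "\<forall>i\<in>{1..n}. l i + l (n + 1 - i) = 0" "\<forall>i\<in>{1..n}. (w + l i) mod 2 = (int n + 1) mod 2"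
    "\<forall>i\<in>{1..n}. \<forall>j\<in>{1..n}. i < j \<longrightarrow> l j < l i" using L unfolding L0plus_def by auto
  have L'def: "\<forall>i\<in>{1..m}. l' i + l' (m + 1 - i) = 0" "\<forall>i\<in>{1..m}. (w' + l' i) mod 2 = (int m + 1) mod 2"
    "\<forall>i\<in>{1..m}. \<forall>j\<in>{1..m}. i < j \<longrightarrow> l' j < l' i" using L' unfolding L0plus_def by auto
  have n2: "n \<ge> 2"
  proof (rule ccontr)
    assume "\<not> n \<ge> 2"
    hence n1: "n = 1" using assms(1) by simp
    hence "l 1 = 0" using Ldef(1) by auto
    have m2: "m \<ge> 2" using assms(2,3) n1 by auto
    have "l' m < l' 1" using L'def(3) m2 by auto
    moreover have "l' 1 + l' m = 0" using bspec[OF L'def(1), of 1] assms(2) by simp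
    ultimately show False using \<open>l 1 = 0\<close> assms(7) by linarith
  qed
  have ln: "l n = - l 1" using bspec[OF Ldef(1), of 1] assms(1) by simp
  have l'm: "l' m = - l' 1" using bspec[OF L'def(1), of 1] assms(2) by simp
  have PA: "A j \<in> {1..n-1} \<and> l (A j) > l' j \<and> l' j \<ge> l (A j + 1)" if j: "j \<in> {1..m}" for j
  proof -
    have "l' j \<le> l' 1" using L0_mono[OF L', of 1 j] j by auto
    moreover have "l' m \<le> l' j" using L0_mono[OF L', of j m] j by auto
    ultimately have b1: "l 1 > l' j" "l' j \<ge> l n" using ln l'm assms(7) by auto
    obtain a where a: "a \<in> {1..n-1} \<and> l a > l' j \<and> l' j \<ge> l (a + 1)"
      using pos_ex[OF L assms(1) b1] by blast
    have "A j = a" unfolding A_def pos_tuple_def using pos_eq[OF L, of a "l' j"] a by auto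
    then show ?thesis using a by simp
  qed
  have Aeq: "A j = a" if "a \<in> {1..n-1}" "l a > l' j" "l' j \<ge> l (a + 1)" for j a
    unfolding A_def pos_tuple_def using pos_eq[OF L that] by simp
  have lam2: "2 * lam j = w' + l' j - 1 - int m + 2 * int (A j)" if j: "j \<in> {1..m}" for j
  proof -
    have p: "(w' + l' j) mod 2 = (int m + 1) mod 2" using L'def(2) j by auto
    have "nu j = (w' + l' j + 2 * int j - 1 - int m) div 2" using assms(6) unfolding L_to_X_def by simp
    hence "2 * nu j = w' + l' j + 2 * int j - 1 - int m" using p by presburger
    then show ?thesis using assms(9) A_def by simp
  qed
  have dom: "\<forall>i\<in>{1..m}. \<forall>j\<in>{1..m}. i \<le> j \<longrightarrow> lam j \<le> lam i"
  proof (intro ballI impI)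
    fix i j assume i: "i \<in> {1..m}" and j: "j \<in> {1..m}" and ij: "i \<le> j"
    have lij: "l' j \<le> l' i" using L0_mono[OF L', of i j] i j ij by auto
    have par: "(l' i - l' j) mod 2 = 0" using bspec[OF L'def(2), OF i] bspec[OF L'def(2), OF j] by presburger
    have "l' i - l' j \<ge> 2 * (int (A j) - int (A i))"
    proof (cases "A j \<le> A i")
      case True then show ?thesis using lij by simp
    next
      case False
      have d: "l (A i + 1) - l (A j) \<ge> 2 * (int (A j) - int (A i + 1))"
        using L0_dec[OF L, of "A i + 1" "A j"] False PA[OF i] PA[OF j] by auto
      have "l' i - l' j > 2 * (int (A j) - int (A i)) - 2" using d PA[OF i] PA[OF j] by simp
      then show ?thesis using par by presburger
    qed
    then show "lam j \<le> lam i" using lam2[OF i] lam2[OF j] by simp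
  qed
  have sym: "lam j + lam (m + 1 - j) = w' + int n - int m - 1"
    if j: "j \<in> {1..m}" and ne: "l' j \<noteq> l (A j + 1)" for j
  proof -
    have j': "m + 1 - j \<in> {1..m}" using j by auto
    have l'r: "l' (m + 1 - j) = - l' j" using bspec[OF L'def(1), OF j] by (simp add: eq_neg_iff_add_eq_0 add.commute)
    have pa: "A j \<in> {1..n-1}" "l (A j) > l' j" "l' j > l (A j + 1)" using PA[OF j] ne by auto
    have e1: "l (n - A j) = - l (A j + 1)"
      using bspec[OF Ldef(1), of "A j + 1"] pa(1) n2 by (auto simp: eq_neg_iff_add_eq_0 add.commute)
    have e2: "l (n - A j + 1) = - l (A j)"
      proof -
        have "n + 1 - A j = n - A j + 1" using pa(1) by auto
        then show ?thesis using bspec[OF Ldef(1), of "A j"] pa(1) n2 by (auto simp: eq_neg_iff_add_eq_0 add.commute)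
      qed
    have "A (m + 1 - j) = n - A j"
      by (rule Aeq) (use pa e1 e2 l'r n2 in auto)
    then show ?thesis using lam2[OF j] lam2[OF j'] l'r pa(1) by auto
  qed
  have neq: "l' j \<noteq> l (A j + 1)" if j: "j \<in> {1..m}" and c: "2 * j \<noteq> m + 1 \<or> \<not> (odd n \<and> odd m)" for j
  proof -
    have "A j + 1 \<in> {1..n}" using PA[OF j] by auto
    then show ?thesis using assms(8) j c by fastforce
  qed
  have S1: "\<forall>j\<in>{1..m}. 2 * j \<noteq> m + 1 \<longrightarrow> lam j + lam (m + 1 - j) = w' + int n - int m - 1"
    using sym neq by blast
  have S2: "odd n \<and> odd m \<longrightarrow> 2 * lam ((m + 1) div 2) = w' + int n - int m - 2"
  proof
    assume o: "odd n \<and> odd m"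
    define j0 where "j0 = (m + 1) div 2"
    define i0 where "i0 = (n + 1) div 2"
    have j0: "j0 \<in> {1..m}" "m + 1 - j0 = j0" using o assms(2) unfolding j0_def by (auto elim!: oddE)
    have i0: "i0 \<in> {1..n}" "n + 1 - i0 = i0" "i0 \<ge> 2" using o n2 unfolding i0_def by (auto elim!: oddE)
    have "l' j0 = 0" using bspec[OF L'def(1), OF j0(1)] j0(2) by simp
    moreover have "l i0 = 0" using bspec[OF Ldef(1), OF i0(1)] i0(2) by simp
    moreover have "l (i0 - 1) > l i0" proof -
      have "i0 - 1 \<in> {1..n}" "i0 \<in> {1..n}" "i0 - 1 < i0" using i0 by auto
      then show ?thesis using Ldef(3) by blast
    qed
    ultimately have "A j0 = i0 - 1" using i0 by (intro Aeq) auto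
    then have "2 * lam j0 = w' - 1 - int m + 2 * int (i0 - 1)" using lam2[OF j0(1)] \<open>l' j0 = 0\<close> by simp
    moreover have "2 * int (i0 - 1) = int n - 1" using o i0 unfolding i0_def by (auto elim!: oddE)
    ultimately show "2 * lam ((m + 1) div 2) = w' + int n - int m - 2" unfolding j0_def by simp
  qed
  have S3: "\<not> (odd n \<and> odd m) \<longrightarrow>
         (\<forall>j\<in>{1..m}. lam j + lam (m + 1 - j) = w' + int n - int m - 1) \<and> lam \<in> X0plus m"
  proof
    assume o: "\<not> (odd n \<and> odd m)"
    have all: "\<forall>j\<in>{1..m}. lam j + lam (m + 1 - j) = w' + int n - int m - 1"
      using sym neq o by blast
    moreover have "lam \<in> X0plus m" unfolding X0plus_def Xplus_def using dom all by blast
    ultimately show "(\<forall>j\<in>{1..m}. lam j + lam (m + 1 - j) = w' + int n - int m - 1) \<and> lam \<in> X0plus m" by blast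
  qed
  show ?thesis using dom S1 S2 S3 by blast
qed

end
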